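(* Consider Method 2.4 (described in the context), with a fixed $\varepsilon>0$, and suppose it does not terminate and the numbers $\delta_k>0$ satisfy $\delta_k\to0$. Then the sequences $\{x_k\},\{\sigma_k\}$ are defined for all $k\in K$ and $\lim_{k\to\infty}g(x_k)=f^*+\varepsilon$, $\lim_{k\to\infty}\sigma_k=f^*+\varepsilon$, where $g(x)=f(x)+\varepsilon$.
   Context: Setting: $D\subset\mathbb{R}^n$ closed convex; $f$ convex on $\mathbb{R}^n$ attaining its minimum $f^*$ on $D$; $X^*=\{x\in D:f(x)=f^*\}$; fixed $\varepsilon>0$, $g(x)=f(x)+\varepsilon$, $g^*=\min_Dg=f^*+\varepsilon$; $\operatorname{epi}(g,\mathbb{R}^n)=\{(x,\gamma):\gamma\ge g(x)\}$; $W^1(u,Q)=\{a\in\mathbb{R}^{n+1}:\|a\|=1,\ \langle a,v-u\rangle\le0\ \forall v\in Q\}$; $K=\{0,1,\dots\}$; $J=\{1,\dots,m\}$. Method 2.4: fix $x^*\in X^*$; choose $v^j\in\operatorname{int}\operatorname{epi}(g,\mathbb{R}^n)$, $j\in J$, a closed convex bounded $G_0\subset D$ with $x^*\in G_0$, a closed convex $M_0\subseteq\mathbb{R}^{n+1}$ with $\operatorname{epi}(g,\mathbb{R}^n)\subset M_0$, numbers $\delta_0>0$, $\bar\gamma_0\le g^*$, constant $q\ge1$; $i=k=0$. Step 1: $u_i=(y_i,\gamma_i)$ solves $\min\{\gamma:(x,\gamma)\in M_i,\ x\in G_i,\ \gamma\ge\bar\gamma_i\}$; if $\gamma_i=g(y_i)$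 stop. Step 2: for each $j\in J$ choose $\bar u_i^j$ in the open segment $(v^j,u_i)$ with $\bar u_i^j\notin\operatorname{int}\operatorname{epi}(g,\mathbb{R}^n)$ and $u_i+q_i^j(\bar u_i^j-u_i)\in\operatorname{epi}(g,\mathbb{R}^n)$ for some $q_i^j\in[1,q]$. Step 3: if $\|\bar u_i^j-u_i\|>\delta_k$ for all $j\in J$, choose closed convex $Q_i\subseteq M_i$ with $\operatorname{epi}(g,\mathbb{R}^n)\subset Q_i$ and go to Step 5. Step 4: choose closed convex $Q_i\supseteq\operatorname{epi}(g,\mathbb{R}^n)$; set $i_k=i$, $\sigma_k=\gamma_{i_k}$; choose $x_k\in G_{i_k}$ with $g(x_k)\le g(y_{i_k})$; choose $\delta_{k+1}>0$; $k\leftarrow k+1$. Step 5: for $j\in J$ choose nonempty finite $A_i^j\subset W^1(\bar u_i^j,\operatorname{epi}(g,\mathbb{R}^n))$; $M_{i+1}=Q_i\cap\bigcap_{j\in J}\{u\in\mathbb{R}^{n+1}:\langle a,u-\bar u_i^j\rangle\le0\ \forall a\in A_i^j\}$. Step 6: choose closed convex $G_{i+1}\subseteq G_0$ with $x^*\in G_{i+1}$ and $\bar\gamma_{i+1}\in[\bar\gamma_0,g^*]$; $i\leftarrow i+1$; go to Step 1. *)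

theory Defs
  imports "HOL-Analysis.Analysis"
begin

definition epi :: "('a \<Rightarrow> real) \<Rightarrow> ('a \<times> real) set" where
  "epi g = {(x, \<gamma>). \<gamma> \<ge> g x}"

definition W1 :: "'b::real_inner \<Rightarrow> 'b set \<Rightarrow> 'b set" where
  "W1 u Q = {a. norm a = 1 \<and> (\<forall>v\<in>Q. inner a (v - u) \<le> 0)}"

end

theory Submission
  imports Defs
begin

theorem theorem2p4p3:
  fixes f :: "'a::euclidean_space \<Rightarrow> real"
    and D :: "'a set" and fstar \<epsilon> :: real and xstar :: 'a
    and m :: nat and v :: "nat \<Rightarrow> 'a \<times> real" and q :: real
    and G :: "nat \<Rightarrow> 'a set" and M Q :: "nat \<Rightarrow> ('a \<times> real) set"
    and gbar :: "nat \<Rightarrow> real"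
    and y :: "nat \<Rightarrow> 'a" and gam :: "nat \<Rightarrow> real"
    and ubar :: "nat \<Rightarrow> nat \<Rightarrow> 'a \<times> real" and qq :: "nat \<Rightarrow> nat \<Rightarrow> real"
    and A :: "nat \<Rightarrow> nat \<Rightarrow> ('a \<times> real) set"
    and kc :: "nat \<Rightarrow> nat" and delta :: "nat \<Rightarrow> real"
    and sigma :: "nat \<Rightarrow> real" and x :: "nat \<Rightarrow> 'a"
  assumes D: "closed D" "convex D"
    and f_convex: "convex_on UNIV f"
    and fstar_min: "\<forall>z\<in>D. fstar \<le> f z"
    and eps: "\<epsilon> > 0"
    and xstar: "xstar \<in> D" "f xstar = fstar"
    and m: "m \<ge> 1"
    and v: "\<forall>j\<in>{1..m}. v j \<in> interior (epi (\<lambda>z. f z + \<epsilon>))"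
    and G0: "closed (G 0)" "convex (G 0)" "bounded (G 0)" "G 0 \<subseteq> D" "xstar \<in> G 0"
    and M0: "closed (M 0)" "convex (M 0)" "epi (\<lambda>z. f z + \<epsilon>) \<subseteq> M 0"
    and delta0: "delta 0 > 0"
    and gbar0: "gbar 0 \<le> fstar + \<epsilon>"
    and q: "q \<ge> 1"
    and kc0: "kc 0 = 0"
    \<comment> \<open>Step 1: u_i = (y_i, gam_i) solves the auxiliary problem\<close>
    and step1: "\<forall>i. (y i, gam i) \<in> M i \<and> y i \<in> G i \<and> gam i \<ge> gbar i \<and>
                 (\<forall>z \<gamma>. (z, \<gamma>) \<in> M i \<and> z \<in> G i \<and> \<gamma> \<ge> gbar i \<longrightarrow> gam i \<le> \<gamma>)"
    \<comment> \<open>the method does not terminate\<close>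
    and nonterm: "\<forall>i. gam i \<noteq> f (y i) + \<epsilon>"
    \<comment> \<open>Step 2\<close>
    and step2: "\<forall>i. \<forall>j\<in>{1..m}. ubar i j \<in> open_segment (v j) (y i, gam i) \<and>
                 ubar i j \<notin> interior (epi (\<lambda>z. f z + \<epsilon>)) \<and>
                 1 \<le> qq i j \<and> qq i j \<le> q \<and>
                 (y i, gam i) + qq i j *\<^sub>R (ubar i j - (y i, gam i)) \<in> epi (\<lambda>z. f z + \<epsilon>)"
    \<comment> \<open>Steps 3 and 4 (Q_i is always closed convex and contains the epigraph)\<close>
    and Q: "\<forall>i. closed (Q i) \<and> convex (Q i) \<and> epi (\<lambda>z. f z + \<epsilon>) \<subseteq> Q i"
    and step3: "\<forall>i. (\<forall>j\<in>{1..m}. norm (ubar i j - (y i, gam i)) > delta (kc i)) \<longrightarrow>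
                 Q i \<subseteq> M i \<and> kc (Suc i) = kc i"
    and step4: "\<forall>i. (\<exists>j\<in>{1..m}. norm (ubar i j - (y i, gam i)) \<le> delta (kc i)) \<longrightarrow>
                 sigma (kc i) = gam i \<and> x (kc i) \<in> G i \<and>
                 f (x (kc i)) + \<epsilon> \<le> f (y i) + \<epsilon> \<and> kc (Suc i) = Suc (kc i)"
    \<comment> \<open>Step 5\<close>
    and step5A: "\<forall>i. \<forall>j\<in>{1..m}. finite (A i j) \<and> A i j \<noteq> {} \<and>
                 A i j \<subseteq> W1 (ubar i j) (epi (\<lambda>z. f z + \<epsilon>))"
    and step5M: "\<forall>i. M (Suc i) = Q i \<inter>
                 (\<Inter>j\<in>{1..m}. {u. \<forall>a\<in>A i j. inner a (u - ubar i j) \<le> 0})"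
    \<comment> \<open>Step 6\<close>
    and step6: "\<forall>i. closed (G (Suc i)) \<and> convex (G (Suc i)) \<and> G (Suc i) \<subseteq> G 0 \<and>
                 xstar \<in> G (Suc i) \<and> gbar 0 \<le> gbar (Suc i) \<and> gbar (Suc i) \<le> fstar + \<epsilon>"
    \<comment> \<open>the chosen numbers delta_k are positive and tend to zero\<close>
    and delta_pos: "\<forall>k. delta k > 0"
    and delta_lim: "delta \<longlonglongrightarrow> 0"
  shows "(\<forall>k. \<exists>i. kc i = k \<and> (\<exists>j\<in>{1..m}. norm (ubar i j - (y i, gam i)) \<le> delta k))
         \<and> (\<lambda>k. f (x k) + \<epsilon>) \<longlonglongrightarrow> fstar + \<epsilon>
         \<and> sigma \<longlonglongrightarrow> fstar + \<epsilon>"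
proof -
  define E where "E = epi (\<lambda>z. f z + \<epsilon>)"
  define gs where "gs = fstar + \<epsilon>"
  define U where "U i = (y i, gam i)" for i
  define S4 where "S4 i \<longleftrightarrow> (\<exists>j\<in>{1..m}. norm (ubar i j - U i) \<le> delta (kc i))" for i
  have m1: "1 \<in> {1..m}" using m by simp
  have ME: "E \<subseteq> M i" for i
  proof (induction i)
    case 0 then show ?case using M0 E_def by simp
  next
    case (Suc i)
    show ?case
    proof
      fix u assume uE: "u \<in> E"
      have "u \<in> Q i" using Q uE E_def by auto
      moreover have "inner a (u - ubar i j) \<le> 0" if "j \<in> {1..m}" "a \<in> A i j" for j a
      proof -
        have "a \<in> W1 (ubar i j) E" using step5A that E_def by blast
        then show ?thesis using uE unfolding W1_def by blast
      qed
      ultimately show "u \<in> M (Suc i)" using step5M by auto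
    qed
  qed
  have Gsub: "G i \<subseteq> G 0" for i using step6 by (cases i) auto
  have xG: "xstar \<in> G i" for i using step6 G0 by (cases i) auto
  have gb: "gbar 0 \<le> gbar i \<and> gbar i \<le> gs" for i using step6 gbar0 gs_def by (cases i) auto
  have xsE: "(xstar, gs) \<in> E" using xstar unfolding gs_def E_def epi_def by simp
  have gam_le: "gam i \<le> gs" for i
    using step1 xsE ME xG gb by blast
  have gam_ge: "gbar 0 \<le> gam i" for i using step1 gb order_trans by blast
  have fD: "fstar \<le> f z" if "z \<in> G i" for z i using fstar_min Gsub G0 that by blast
  obtain Bd where Bd: "\<forall>z\<in>G 0. norm z \<le> Bd" using G0(3) bounded_iff by blast
  define B where "B = Bd + \<bar>gbar 0\<bar> + \<bar>gs\<bar>"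
  have UB: "norm (U i) \<le> B" for i
  proof -
    have "norm (U i) \<le> norm (y i) + norm (gam i)" unfolding U_def by (rule norm_Pair_le)
    moreover have "norm (y i) \<le> Bd" using Bd step1 Gsub by blast
    moreover have "norm (gam i) \<le> \<bar>gbar 0\<bar> + \<bar>gs\<bar>" using gam_le[of i] gam_ge[of i] by auto
    ultimately show ?thesis unfolding B_def by linarith
  qed
  have S3: "\<not> S4 i \<Longrightarrow> kc (Suc i) = kc i \<and> Q i \<subseteq> M i" for i
    using step3 unfolding S4_def U_def by (auto simp: not_le)
  have S4s: "S4 i \<Longrightarrow> kc (Suc i) = Suc (kc i)" for i
    using step4 unfolding S4_def U_def by blast
  have inf: "\<exists>i\<ge>i0. S4 i" for i0
  proof (rule ccontr)
    assume "\<not> (\<exists>i\<ge>i0. S4 i)"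
    then have H: "\<And>i. i \<ge> i0 \<Longrightarrow> \<not> S4 i" by blast
    have kconst: "kc (i0 + d) = kc i0" for d
      by (induction d) (use H S3 in auto)
    define dl where "dl = delta (kc i0)"
    have dl: "dl > 0" using delta_pos dl_def by simp
    have Mdec: "M (Suc i + d) \<subseteq> M (Suc i)" if "i \<ge> i0" for i d
    proof (induction d)
      case 0 then show ?case by simp
    next
      case (Suc d)
      have "M (Suc (Suc i + d)) \<subseteq> M (Suc i + d)"
        using step5M S3[OF H[of "Suc i + d"]] that by auto
      then show ?case using Suc by simp
    qed
    have "v 1 \<in> interior E" using v m1 unfolding E_def by blast
    then obtain r where r: "r > 0" "ball (v 1) r \<subseteq> E"
      unfolding mem_interior by blast
    define p where "p = v 1"
    define R where "R = B + norm p + 1"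
    have R: "R > 0" unfolding R_def using UB[of 0] norm_ge_zero[of "U 0"] norm_ge_zero[of p] by linarith
    define c where "c = dl * r / (2 * R)"
    have c: "c > 0" unfolding c_def using dl r R by simp
    have key: "c \<le> norm (U l - U i)" if "i \<ge> i0" "l > i" for i l
    proof -
      define w where "w = U i"
      define b where "b = ubar i 1"
      obtain a where aA: "a \<in> A i 1" using step5A m1 by blast
      have aW: "a \<in> W1 b E" using step5A m1 aA E_def b_def by blast
      then have na: "norm a = 1" and aE: "\<forall>z\<in>E. inner a (z - b) \<le> 0" unfolding W1_def by auto
      have "b \<in> open_segment p w" using step2 m1 unfolding b_def p_def w_def U_def by blast
      then obtain t where t: "0 < t" "t < 1" "b = (1 - t) *\<^sub>R p + t *\<^sub>R w"
        unfolding in_segment by blast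
      define z0 where "z0 = p + (r/2) *\<^sub>R a"
      have "dist p z0 < r" unfolding z0_def dist_norm using na r by simp
      then have "z0 \<in> E" using r p_def by auto
      then have "inner a (z0 - b) \<le> 0" using aE by blast
      moreover have "inner a (z0 - b) = inner a (p - b) + r/2"
        unfolding z0_def using na by (simp add: inner_diff_right inner_add_right power2_norm_eq_inner[symmetric])
      moreover have "p - b = - (t *\<^sub>R (w - p))" using t(3) by (simp add: algebra_simps)
      ultimately have h1: "t * inner a (w - p) \<ge> r/2" by (simp add: inner_minus_right)
      have "r/2 > 0" using r by simp
      then have h2: "inner a (w - p) \<ge> r/2"
      proof -
        have "t * inner a (w - p) > 0" using h1 r by linarith
        then have pos: "inner a (w - p) > 0" using t(1) zero_less_mult_pos by blast
        have "t * inner a (w - p) \<le> inner a (w - p)" using pos t by (simp add: mult_le_cancel_right1)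
        then show ?thesis using h1 by linarith
      qed
      have wb: "w - b = (1 - t) *\<^sub>R (w - p)" using t(3) by (simp add: algebra_simps)
      have iwb: "inner a (w - b) = (1 - t) * inner a (w - p)" unfolding wb by simp
      have "norm (ubar i 1 - U i) > delta (kc i)" using H[OF that(1)] m1 unfolding S4_def by (auto simp: not_le)
      moreover have "kc i = kc i0" using kconst[of "i - i0"] that by simp
      ultimately have "norm (w - b) > dl" unfolding dl_def w_def b_def by (simp add: norm_minus_commute)
      then have n1: "(1 - t) * norm (w - p) > dl" unfolding wb using t by simp
      have "norm (w - p) \<le> norm w + norm p" by (rule norm_triangle_ineq4)
      then have "norm (w - p) \<le> R" unfolding R_def w_def using UB[of i] by linarith
      moreover have "(1 - t) * norm (w - p) \<le> (1 - t) * R" if "norm (w - p) \<le> R"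
        using mult_left_mono[OF that, of "1 - t"] t by simp
      ultimately have "(1 - t) * R > dl" using n1 by linarith
      then have "(1 - t) * R * (r/2) > dl * (r/2)" using r by simp
      moreover have "(1 - t) * (r/2) \<le> inner a (w - b)" unfolding iwb using h2 t by simp
      moreover have "R * ((1 - t) * (r/2)) \<le> R * inner a (w - b)"
        using mult_left_mono[OF calculation(2), of R] R by simp
      moreover have "(1 - t) * R * (r/2) = R * ((1 - t) * (r/2))" by simp
      ultimately have "R * inner a (w - b) > dl * r / 2" by linarith
      then have cb: "inner a (w - b) > c" unfolding c_def using R
        by (simp add: field_simps)
      have "U l \<in> M (Suc i)"
      proof -
        have "U l \<in> M l" using step1 U_def by simp
        moreover have "l = Suc i + (l - Suc i)" using that by simp
        ultimately show ?thesis using Mdec[OF that(1), of "l - Suc i"] by auto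
      qed
      then have "inner a (U l - b) \<le> 0" using step5M aA m1 unfolding b_def by auto
      moreover have "inner a (U l - w) = inner a (U l - b) - inner a (w - b)"
        by (simp add: inner_diff_right)
      ultimately have "inner a (U l - w) \<le> - c" using cb by linarith
      moreover have "\<bar>inner a (U l - w)\<bar> \<le> norm (U l - w)" using Cauchy_Schwarz_ineq2[of a] na by simp
      ultimately show ?thesis unfolding w_def by linarith
    qed
    have "bounded (range U)" using UB unfolding bounded_iff by blast
    then obtain l rr where rr: "strict_mono rr" "(U \<circ> rr) \<longlonglongrightarrow> l"
      using bounded_imp_convergent_subsequence by blast
    then have "Cauchy (U \<circ> rr)" using LIMSEQ_imp_Cauchy by blast
    then obtain N where N: "\<forall>m'\<ge>N. \<forall>n\<ge>N. dist ((U \<circ> rr) m') ((U \<circ> rr) n) < c"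
      using c unfolding Cauchy_def by blast
    have "dist (U (rr (N + i0 + 1))) (U (rr (N + i0))) < c" using N by simp
    moreover have "rr (N + i0) \<ge> i0" using rr(1) seq_suble[OF rr(1), of "N + i0"] by simp
    moreover have "rr (N + i0 + 1) > rr (N + i0)" using rr(1) by (simp add: strict_mono_def)
    ultimately show False using key[of "rr (N + i0)" "rr (N + i0 + 1)"] by (simp add: dist_norm)
  qed
  have stay: "(\<forall>n. i \<le> n \<and> n < i + d \<longrightarrow> \<not> S4 n) \<longrightarrow> kc (i + d) = kc i" for i d
  proof (induction d)
    case 0 then show ?case by simp
  next
    case (Suc d)
    show ?case
    proof
      assume h: "\<forall>n. i \<le> n \<and> n < i + Suc d \<longrightarrow> \<not> S4 n"
      then have "\<forall>n. i \<le> n \<and> n < i + d \<longrightarrow> \<not> S4 n" by simp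
      then have "kc (i + d) = kc i" using Suc.IH by (rule mp[rotated])
      moreover have "\<not> S4 (i + d)" using h by simp
      ultimately show "kc (i + Suc d) = kc i" using S3[of "i + d"] by simp
    qed
  qed
  have first: "\<exists>n. kc n = kc i \<and> S4 n" for i
  proof -
    define P where "P n \<longleftrightarrow> i \<le> n \<and> S4 n" for n
    obtain n0 where "P n0" using inf[of i] P_def by blast
    define n where "n = (LEAST n. P n)"
    have Pn: "P n" using LeastI[of P, OF \<open>P n0\<close>] n_def by simp
    have ni: "i \<le> n" using Pn unfolding P_def by blast
    have nS: "\<not> S4 n'" if "i \<le> n'" "n' < n" for n'
    proof -
      have "\<not> P n'" using not_less_Least[of n' P] that(2) unfolding n_def by blast
      then show ?thesis using that(1) unfolding P_def by blast
    qed
    have "\<forall>n'. i \<le> n' \<and> n' < i + (n - i) \<longrightarrow> \<not> S4 n'"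
      using nS ni by simp
    then have "kc (i + (n - i)) = kc i" using stay by blast
    then have "kc n = kc i" using ni by simp
    moreover have "S4 n" using Pn unfolding P_def by blast
    ultimately show ?thesis by blast
  qed
  have K: "\<exists>i. kc i = k \<and> S4 i" for k
  proof (induction k)
    case 0 then show ?case using first[of 0] kc0 by simp
  next
    case (Suc k)
    then obtain i where "kc i = k" "S4 i" by blast
    then show ?case using first[of "Suc i"] S4s by auto
  qed
  define ik where "ik k = (SOME i. kc i = k \<and> S4 i)" for k
  have ik: "kc (ik k) = k \<and> S4 (ik k)" for k unfolding ik_def by (rule someI_ex[OF K])
  have sig: "sigma k = gam (ik k)" and xk: "x k \<in> G (ik k)" and fx: "f (x k) \<le> f (y (ik k))" for k
    using step4 ik[of k] unfolding S4_def U_def by auto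
  have cont: "continuous_on UNIV f" using convex_on_continuous[OF open_UNIV f_convex] .
  define Kc where "Kc = cball (0::'a) (Bd + 1)"
  have "uniformly_continuous_on Kc f"
    using compact_uniformly_continuous[OF continuous_on_subset[OF cont] compact_cball] Kc_def by blast
  have gap: "\<exists>N. \<forall>k\<ge>N. f (y (ik k)) + \<epsilon> - gam (ik k) < e" if e: "e > 0" for e
  proof -
    obtain d' where d': "d' > 0" "\<forall>z\<in>Kc. \<forall>z'\<in>Kc. dist z' z < d' \<longrightarrow> dist (f z') (f z) < e/2"
      using \<open>uniformly_continuous_on Kc f\<close> half_gt_zero[OF e] unfolding uniformly_continuous_on_def
      by blast
    define e' where "e' = min (min d' 1) (e/2) / (2 * q)"
    have e': "e' > 0" unfolding e'_def using d' e q by simp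
    obtain N where N: "\<forall>k\<ge>N. norm (delta k - 0) < e'" using LIMSEQ_D[OF delta_lim e'] by blast
    have "f (y (ik k)) + \<epsilon> - gam (ik k) < e" if "k \<ge> N" for k
    proof -
      define i where "i = ik k"
      obtain j where j: "j \<in> {1..m}" "norm (ubar i j - U i) \<le> delta k"
        using ik[of k] unfolding S4_def i_def by auto
      define w where "w = U i + qq i j *\<^sub>R (ubar i j - U i)"
      have st2: "1 \<le> qq i j \<and> qq i j \<le> q \<and>
                 (y i, gam i) + qq i j *\<^sub>R (ubar i j - (y i, gam i)) \<in> epi (\<lambda>z. f z + \<epsilon>)"
        using step2 j(1) by blast
      then have wE: "w \<in> E" and qq: "1 \<le> qq i j" "qq i j \<le> q" unfolding w_def U_def E_def by auto
      have "norm (w - U i) = qq i j * norm (ubar i j - U i)" unfolding w_def using qq by simp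
      also have "\<dots> \<le> q * delta k"
        by (rule mult_mono) (use qq q j(2) in auto)
      also have "\<dots> < q * e'" using N that q by (simp add: delta_pos less_imp_le[OF delta_pos[rule_format]])
      also have "q * e' = min (min d' 1) (e/2) / 2" unfolding e'_def using q by simp
      finally have nw: "norm (w - U i) < min (min d' 1) (e/2) / 2" .
      have mn: "min (min d' 1) (e/2) \<le> d'" "min (min d' 1) (e/2) \<le> 1" "min (min d' 1) (e/2) \<le> e/2" by auto
      have wU: "w - U i = (fst w - y i, snd w - gam i)" unfolding U_def by (cases w) simp
      have n1: "norm (fst w - y i) \<le> norm (w - U i)" unfolding wU by (rule norm_fst_le)
      have n2': "norm (snd w - gam i) \<le> norm (w - U i)" unfolding wU by (rule norm_snd_le)
      then have n2: "\<bar>snd w - gam i\<bar> \<le> norm (w - U i)" by simp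
      have yG: "y i \<in> G 0" using step1 Gsub by blast
      have ny: "norm (y i) \<le> Bd" using Bd yG by blast
      have yK: "y i \<in> Kc" using ny unfolding Kc_def by simp
      have "norm (y i + (fst w - y i)) \<le> norm (y i) + norm (fst w - y i)" by (rule norm_triangle_ineq)
      then have "norm (fst w) \<le> norm (y i) + norm (fst w - y i)" by simp
      moreover have "norm (w - U i) < 1" using nw by linarith
      ultimately have wK: "fst w \<in> Kc" using ny n1 unfolding Kc_def by simp
      have "dist (fst w) (y i) < d'" unfolding dist_norm using n1 nw mn d'(1) e by linarith
      then have "dist (f (fst w)) (f (y i)) < e/2" using d'(2) yK wK by blast
      then have "\<bar>f (fst w) - f (y i)\<bar> < e/2" by (simp add: dist_real_def)
      moreover have "f (fst w) + \<epsilon> \<le> snd w" using wE unfolding E_def epi_def by (cases w) auto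
      moreover have "snd w - gam i < e/2" using n2 nw mn d'(1) e by linarith
      ultimately show ?thesis unfolding i_def by linarith
    qed
    then show ?thesis by blast
  qed
  have low: "gs \<le> f (x k) + \<epsilon>" for k using fD[OF xk[of k]] gs_def by simp
  have upp: "f (x k) + \<epsilon> \<le> f (y (ik k)) + \<epsilon>" for k using fx by simp
  have L1: "(\<lambda>k. f (x k) + \<epsilon>) \<longlonglongrightarrow> gs"
  proof (rule LIMSEQ_I)
    fix e :: real assume "e > 0"
    then obtain N where N: "\<forall>k\<ge>N. f (y (ik k)) + \<epsilon> - gam (ik k) < e" using gap by blast
    have "norm (f (x k) + \<epsilon> - gs) < e" if "k \<ge> N" for k
    proof -
      have h: "f (y (ik k)) + \<epsilon> - gam (ik k) < e" using N that by blast
      have "gs \<le> f (x k) + \<epsilon>" "f (x k) + \<epsilon> \<le> f (y (ik k)) + \<epsilon>" "gam (ik k) \<le> gs"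
        using low upp gam_le by auto
      then show ?thesis using h unfolding real_norm_def by (intro abs_less_iff[THEN iffD2] conjI; linarith)
    qed
    then show "\<exists>N. \<forall>k\<ge>N. norm (f (x k) + \<epsilon> - gs) < e" by blast
  qed
  have L2: "sigma \<longlonglongrightarrow> gs"
  proof (rule LIMSEQ_I)
    fix e :: real assume "e > 0"
    then obtain N where N: "\<forall>k\<ge>N. f (y (ik k)) + \<epsilon> - gam (ik k) < e" using gap by blast
    have "norm (sigma k - gs) < e" if "k \<ge> N" for k
    proof -
      have h: "f (y (ik k)) + \<epsilon> - gam (ik k) < e" using N that by blast
      have "gs \<le> f (x k) + \<epsilon>" "f (x k) + \<epsilon> \<le> f (y (ik k)) + \<epsilon>" "gam (ik k) \<le> gs"
        "sigma k = gam (ik k)"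
        using low upp gam_le sig by auto
      then show ?thesis using h unfolding real_norm_def by (intro abs_less_iff[THEN iffD2] conjI; linarith)
    qed
    then show "\<exists>N. \<forall>k\<ge>N. norm (sigma k - gs) < e" by blast
  qed
  have P1: "\<forall>k. \<exists>i. kc i = k \<and> (\<exists>j\<in>{1..m}. norm (ubar i j - (y i, gam i)) \<le> delta k)"
  proof
    fix k
    have k1: "kc (ik k) = k" and k2: "S4 (ik k)" using ik[of k] by auto
    from k2 obtain j where "j \<in> {1..m}" "norm (ubar (ik k) j - U (ik k)) \<le> delta (kc (ik k))"
      unfolding S4_def by blast
    then have "\<exists>j\<in>{1..m}. norm (ubar (ik k) j - (y (ik k), gam (ik k))) \<le> delta k"
      using k1 unfolding U_def by auto
    then show "\<exists>i. kc i = k \<and> (\<exists>j\<in>{1..m}. norm (ubar i j - (y i, gam i)) \<le> delta k)"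
      using k1 by blast
  qed
  have L1': "(\<lambda>k. f (x k) + \<epsilon>) \<longlonglongrightarrow> fstar + \<epsilon>" using L1 unfolding gs_def .
  have L2': "sigma \<longlonglongrightarrow> fstar + \<epsilon>" using L2 unfolding gs_def .
  show ?thesis using P1 L1' L2' by (intro conjI)
qed

end
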